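(* Let $G$ be a connected graph with a vertex $u$. Let $v\in N(u)$ with $d(v)\le d(u)-2$, and let $w\in V(G)\setminus N[u]$ be a neighbor of $v$. If $|N(v)\setminus N[u]|\in\{1,2\}$ and $N(z)\setminus \{v\}\subseteq N(v)\setminus N(u)$ for every $z\in N(v)\setminus N[u]$, then $q(G-vw+uw)>q(G)$.
   Context: $N(x)$ is the neighborhood of $x$, $N[x]=N(x)\cup\{x\}$, $d(x)=|N(x)|$. $Q(G)=D(G)+A(G)$ is the signless Laplacian and $q(G)$ its largest eigenvalue. $G-vw+uw$ denotes the graph obtained by deleting edge $vw$ and adding edge $uw$. *)

theory Defs
  imports Complex_Main
begin

definition simple_graph :: "'a set \<Rightarrow> 'a set set \<Rightarrow> bool" where
  "simple_graph V E \<longleftrightarrow> finite V \<and> (\<forall>e\<in>E. \<exists>x y. x \<in> V \<and> y \<in> V \<and> x \<noteq> y \<and> e = {x, y})"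

definition nbhd :: "'a set set \<Rightarrow> 'a \<Rightarrow> 'a set" where
  "nbhd E x = {y. {x, y} \<in> E}"

definition cnbhd :: "'a set set \<Rightarrow> 'a \<Rightarrow> 'a set" where
  "cnbhd E x = insert x (nbhd E x)"

definition deg :: "'a set set \<Rightarrow> 'a \<Rightarrow> nat" where
  "deg E x = card (nbhd E x)"

definition connected_graph :: "'a set \<Rightarrow> 'a set set \<Rightarrow> bool" where
  "connected_graph V E \<longleftrightarrow> V \<noteq> {} \<and>
     (\<forall>x\<in>V. \<forall>y\<in>V. (\<lambda>a b. {a, b} \<in> E)\<^sup>*\<^sup>* x y)"

definition signless_laplacian :: "'a set set \<Rightarrow> 'a \<Rightarrow> 'a \<Rightarrow> real" where
  "signless_laplacian E x y =
     (if x = y then real (deg E x) else 0) + (if {x, y} \<in> E then 1 else 0)"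

definition is_eigenvalue :: "'a set \<Rightarrow> ('a \<Rightarrow> 'a \<Rightarrow> real) \<Rightarrow> real \<Rightarrow> bool" where
  "is_eigenvalue V M mu \<longleftrightarrow> (\<exists>f :: 'a \<Rightarrow> real. (\<exists>x\<in>V. f x \<noteq> 0) \<and>
      (\<forall>x\<in>V. (\<Sum>y\<in>V. M x y * f y) = mu * f x))"

definition q_index :: "'a set \<Rightarrow> 'a set set \<Rightarrow> real" where
  "q_index V E = Max {mu. is_eigenvalue V (signless_laplacian E) mu}"

end

theory Submission
  imports Defs "HOL-Analysis.Analysis" "HOL-Library.Function_Algebras"
begin

definition ip :: "'a set \<Rightarrow> ('a \<Rightarrow> real) \<Rightarrow> ('a \<Rightarrow> real) \<Rightarrow> real" where
  "ip V f g = (\<Sum>x\<in>V. f x * g x)"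

definition qf :: "'a set \<Rightarrow> ('a \<Rightarrow> 'a \<Rightarrow> real) \<Rightarrow> ('a \<Rightarrow> real) \<Rightarrow> real" where
  "qf V M f = (\<Sum>x\<in>V. \<Sum>y\<in>V. M x y * f x * f y)"

definition symm :: "'a set \<Rightarrow> ('a \<Rightarrow> 'a \<Rightarrow> real) \<Rightarrow> bool" where
  "symm V M \<longleftrightarrow> (\<forall>x\<in>V. \<forall>y\<in>V. M x y = M y x)"

lemma cross_swap:
  assumes "symm V M"
  shows "(\<Sum>x\<in>V. \<Sum>y\<in>V. M x y * f x * g y) = (\<Sum>x\<in>V. g x * (\<Sum>y\<in>V. M x y * f y))"
proof -
  have "(\<Sum>x\<in>V. \<Sum>y\<in>V. M x y * f x * g y) = (\<Sum>y\<in>V. \<Sum>x\<in>V. M x y * f x * g y)"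
    by (rule sum.swap)
  also have "\<dots> = (\<Sum>y\<in>V. g y * (\<Sum>x\<in>V. M y x * f x))"
    unfolding sum_distrib_left
    by (intro sum.cong refl) (use assms in \<open>auto simp: symm_def mult_ac\<close>)
  finally show ?thesis .
qed

lemma qf_expand:
  assumes "symm V M"
  shows "qf V M (\<lambda>z. f z + t * g z) = qf V M f + 2*t*(\<Sum>x\<in>V. g x * (\<Sum>y\<in>V. M x y * f y)) + t^2 * qf V M g"
proof -
  have pw: "M x y * (f x + t*g x) * (f y + t*g y) = M x y * f x * f y + t * (M x y * f x * g y) + t*(M x y * g x * f y) + t^2 * (M x y * g x * g y)" for x y
    by (simp add: algebra_simps power2_eq_square)
  have c2: "(\<Sum>x\<in>V. \<Sum>y\<in>V. M x y * g x * f y) = (\<Sum>x\<in>V. g x * (\<Sum>y\<in>V. M x y * f y))"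
    by (simp add: sum_distrib_left mult_ac)
  show ?thesis
    unfolding qf_def pw sum.distrib sum_distrib_left[symmetric]
    using cross_swap[OF assms, of f g] c2 by simp
qed

lemma ip_expand:
  "ip V (\<lambda>z. f z + t * g z) (\<lambda>z. f z + t * g z) = ip V f f + 2*t*ip V f g + t^2 * ip V g g"
proof -
  have pw: "(f x + t*g x) * (f x + t*g x) = f x * f x + 2*t*(f x * g x) + t^2*(g x * g x)" for x
    by (simp add: algebra_simps power2_eq_square)
  show ?thesis unfolding ip_def pw sum.distrib sum_distrib_left[symmetric] by simp
qed

lemma ip_self_nonneg: "ip V f f \<ge> 0"
  unfolding ip_def by (intro sum_nonneg) auto

lemma ip_self_zero:
  assumes "finite V" "ip V f f = 0" "x \<in> V" shows "f x = 0"
proof -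
  have "\<forall>x\<in>V. f x * f x = 0"
    using assms(2) sum_nonneg_eq_0_iff[OF assms(1), of "\<lambda>x. f x * f x"] unfolding ip_def by auto
  thus ?thesis using assms(3) by auto
qed

lemma variational:
  assumes fin: "finite V" and sy: "symm V M"
    and ub: "\<And>g. qf V M g \<le> l * ip V g g"
    and att: "qf V M f = l * ip V f f"
  shows "\<forall>x\<in>V. (\<Sum>y\<in>V. M x y * f y) = l * f x"
proof -
  define mf where "mf x = (\<Sum>y\<in>V. M x y * f y)" for x
  define r where "r x = mf x - l * f x" for x
  define c where "c = ip V r r"
  define B where "B = qf V M r - l * ip V r r"
  have B: "B \<le> 0" using ub[of r] unfolding B_def by simp
  have K0: "(\<Sum>x\<in>V. r x * mf x) - l * ip V f r = c"
  proof -
    have "(\<Sum>x\<in>V. r x * mf x) - l * ip V f r = (\<Sum>x\<in>V. r x * mf x - l * (f x * r x))"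
      unfolding ip_def sum_subtractf sum_distrib_left[of l] ..
    also have "\<dots> = c" unfolding c_def ip_def r_def
      by (intro sum.cong refl) (simp add: algebra_simps)
    finally show ?thesis .
  qed
  have K: "(\<Sum>x\<in>V. r x * (\<Sum>y\<in>V. M x y * f y)) - l * ip V f r = c"
    using K0 unfolding mf_def .
  have key: "2*t*c + t^2 * B \<le> 0" for t
  proof -
    have "qf V M (\<lambda>z. f z + t * r z) \<le> l * ip V (\<lambda>z. f z + t * r z) (\<lambda>z. f z + t * r z)"
      by (rule ub)
    hence "qf V M f + 2*t*(\<Sum>x\<in>V. r x * (\<Sum>y\<in>V. M x y * f y)) + t^2 * qf V M r
       \<le> l * (ip V f f + 2*t*ip V f r + t^2 * ip V r r)"
      unfolding qf_expand[OF sy] ip_expand .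
    thus ?thesis using att K unfolding B_def by (simp add: algebra_simps)
  qed
  have c0: "c \<ge> 0" unfolding c_def by (rule ip_self_nonneg)
  have "c = 0"
  proof (rule ccontr)
    assume "c \<noteq> 0"
    hence cp: "c > 0" using c0 by simp
    define t where "t = c / (1 - B)"
    have d: "1 - B > 0" using B by simp
    have tp: "t > 0" unfolding t_def using cp d by simp
    have "2*t*c + t^2 * B \<le> 0" by (rule key)
    hence "t * (2*c + t*B) \<le> 0" by (simp add: algebra_simps power2_eq_square)
    hence h: "2*c + t*B \<le> 0" using tp by (simp add: mult_le_0_iff)
    have "t * B = c * B / (1 - B)" unfolding t_def by simp
    moreover have "c * B / (1 - B) \<ge> - c"
      using d cp B by (simp add: field_simps)
    ultimately show False using h cp by linarith
  qed
  show ?thesis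
  proof
    fix x assume "x \<in> V"
    hence "r x = 0" using ip_self_zero[OF fin, of r] \<open>c = 0\<close> unfolding c_def by blast
    thus "(\<Sum>y\<in>V. M x y * f y) = l * f x" unfolding r_def mf_def by simp
  qed
qed

lemma continuous_on_ip: "continuous_on UNIV (\<lambda>f::'a\<Rightarrow>real. ip V f f)"
  unfolding ip_def
  by (intro continuous_intros continuous_on_product_coordinates)

lemma continuous_on_qf: "continuous_on UNIV (\<lambda>f::'a\<Rightarrow>real. qf V M f)"
  unfolding qf_def
  by (intro continuous_intros continuous_on_product_coordinates)

lemma exists_max:
  fixes M :: "'a \<Rightarrow> 'a \<Rightarrow> real"
  assumes fin: "finite V" and ne: "V \<noteq> {}"
  shows "\<exists>f. ip V f f = 1 \<and> (\<forall>g. ip V g g = 1 \<longrightarrow> qf V M g \<le> qf V M f)"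
proof -
  define S where "S i = (if i \<in> V then {-1..1} else {0::real})" for i :: 'a
  have "compactin (product_topology (\<lambda>i. euclidean) UNIV) (PiE UNIV S)"
    by (subst compactin_PiE) (auto simp: S_def)
  hence cP: "compact (PiE UNIV S)"
    by (simp add: euclidean_product_topology)
  define K where "K = PiE UNIV S \<inter> {f. ip V f f = 1}"
  have "closed {f::'a\<Rightarrow>real. ip V f f = 1}"
    using continuous_on_ip[of V] by (intro closed_Collect_eq) auto
  hence cK: "compact K" unfolding K_def using cP by blast
  obtain a where a: "a \<in> V" using ne by blast
  have "(\<lambda>i. if i = a then 1 else 0) \<in> K"
    unfolding K_def S_def ip_def using a fin by (auto simp: if_distrib cong: if_cong)
  hence Kne: "K \<noteq> {}" by blast
  obtain f where f: "f \<in> K" "\<And>g. g \<in> K \<Longrightarrow> qf V M g \<le> qf V M f"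
    using continuous_attains_sup[OF cK Kne, of "qf V M"] continuous_on_subset[OF continuous_on_qf]
    by blast
  show ?thesis
  proof (intro exI conjI allI impI)
    show "ip V f f = 1" using f(1) unfolding K_def by simp
    fix g assume g: "ip V g g = 1"
    define g' where "g' i = (if i \<in> V then g i else 0)" for i
    have eq1: "ip V g' g' = ip V g g" unfolding ip_def g'_def by (intro sum.cong) auto
    have eq2: "qf V M g' = qf V M g" unfolding qf_def g'_def by (intro sum.cong) auto
    have "\<bar>g i\<bar> \<le> 1" if "i \<in> V" for i
    proof -
      have "g i * g i \<le> ip V g g" unfolding ip_def
        by (rule member_le_sum[OF that _ fin, of "\<lambda>x. g x * g x"]) auto
      hence "(\<bar>g i\<bar>)^2 \<le> 1^2" using g by (simp add: power2_eq_square)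
      thus ?thesis by (rule power2_le_imp_le) simp
    qed
    hence "g' \<in> PiE UNIV S" unfolding S_def g'_def
      by (auto simp: abs_le_iff)
    hence "g' \<in> K" unfolding K_def using eq1 g by simp
    thus "qf V M g \<le> qf V M f" using f(2)[of g'] eq2 by simp
  qed
qed

lemma qf_scale: "qf V M (\<lambda>x. c * g x) = c^2 * qf V M g"
  unfolding qf_def sum_distrib_left by (intro sum.cong refl) (simp add: power2_eq_square mult_ac)

lemma ip_scale: "ip V (\<lambda>x. c * g x) (\<lambda>x. c * g x) = c^2 * ip V g g"
  unfolding ip_def sum_distrib_left by (intro sum.cong refl) (simp add: power2_eq_square mult_ac)

lemma qf_zero:
  assumes "finite V" "ip V g g = 0" shows "qf V M g = 0"
  unfolding qf_def using ip_self_zero[OF assms] by simp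

lemma eig_le:
  assumes fin: "finite V" and ub: "\<And>g. qf V M g \<le> l * ip V g g"
    and ev: "is_eigenvalue V M mu"
  shows "mu \<le> l"
proof -
  obtain g where nz: "\<exists>x\<in>V. g x \<noteq> 0" and eq: "\<forall>x\<in>V. (\<Sum>y\<in>V. M x y * g y) = mu * g x"
    using ev unfolding is_eigenvalue_def by blast
  have "qf V M g = (\<Sum>x\<in>V. g x * (\<Sum>y\<in>V. M x y * g y))"
    unfolding qf_def sum_distrib_left by (intro sum.cong refl) (simp add: mult_ac)
  also have "\<dots> = (\<Sum>x\<in>V. g x * (mu * g x))" using eq by simp
  also have "\<dots> = mu * ip V g g" unfolding ip_def sum_distrib_left by (simp add: mult_ac)
  finally have q: "qf V M g = mu * ip V g g" .
  have "ip V g g \<noteq> 0" using ip_self_zero[OF fin, of g] nz by blast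
  hence p: "ip V g g > 0" using ip_self_nonneg[of V g] by simp
  have "mu * ip V g g \<le> l * ip V g g" using ub[of g] q by simp
  thus ?thesis using p by simp
qed

lemma top_eig:
  assumes fin: "finite V" and ne: "V \<noteq> {}" and sy: "symm V M"
    and nn: "\<And>x y. x \<in> V \<Longrightarrow> y \<in> V \<Longrightarrow> M x y \<ge> 0"
  shows "\<exists>f l. ip V f f = 1 \<and> qf V M f = l \<and> (\<forall>g. qf V M g \<le> l * ip V g g) \<and> (\<forall>z\<in>V. f z \<ge> 0)
     \<and> (\<forall>z\<in>V. (\<Sum>y\<in>V. M z y * f y) = l * f z) \<and> is_eigenvalue V M l"
proof -
  obtain f0 where f0: "ip V f0 f0 = 1" "\<And>g. ip V g g = 1 \<Longrightarrow> qf V M g \<le> qf V M f0"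
    using exists_max[OF fin ne, of M] by blast
  define l where "l = qf V M f0"
  have ub: "qf V M g \<le> l * ip V g g" for g
  proof (cases "ip V g g = 0")
    case True thus ?thesis using qf_zero[OF fin True] by simp
  next
    case False
    hence p: "ip V g g > 0" using ip_self_nonneg[of V g] by simp
    define c where "c = 1 / sqrt (ip V g g)"
    have c2: "c^2 = 1 / ip V g g" unfolding c_def using p by (simp add: power_divide)
    have "ip V (\<lambda>x. c * g x) (\<lambda>x. c * g x) = 1" unfolding ip_scale c2 using p by simp
    hence "qf V M (\<lambda>x. c * g x) \<le> l" using f0(2) unfolding l_def by blast
    hence "qf V M g / ip V g g \<le> l" unfolding qf_scale c2 by simp
    thus ?thesis using p by (simp add: divide_le_eq mult.commute)
  qed
  define f where "f x = \<bar>f0 x\<bar>" for x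
  have ipf: "ip V f f = 1" using f0(1) unfolding ip_def f_def by (simp add: abs_mult[symmetric])
  have "qf V M f0 \<le> qf V M f" unfolding qf_def f_def
  proof (intro sum_mono)
    fix x y assume "x \<in> V" "y \<in> V"
    hence m: "M x y \<ge> 0" by (rule nn)
    have "f0 x * f0 y \<le> \<bar>f0 x\<bar> * \<bar>f0 y\<bar>" by (metis abs_ge_self abs_mult)
    hence "M x y * (f0 x * f0 y) \<le> M x y * (\<bar>f0 x\<bar> * \<bar>f0 y\<bar>)" using m by (rule mult_left_mono)
    thus "M x y * f0 x * f0 y \<le> M x y * \<bar>f0 x\<bar> * \<bar>f0 y\<bar>" by (simp add: mult_ac)
  qed
  moreover have "qf V M f \<le> l" using ub[of f] ipf by simp
  ultimately have att: "qf V M f = l * ip V f f" using ipf unfolding l_def by simp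
  have eig: "\<forall>z\<in>V. (\<Sum>y\<in>V. M z y * f y) = l * f z"
    by (rule variational[OF fin sy ub att])
  have "\<exists>x\<in>V. f x \<noteq> 0"
  proof (rule ccontr)
    assume "\<not> ?thesis"
    hence "ip V f f = 0" unfolding ip_def by simp
    thus False using ipf by simp
  qed
  hence "is_eigenvalue V M l" using eig unfolding is_eigenvalue_def by blast
  moreover have "\<forall>z\<in>V. f z \<ge> 0" unfolding f_def by simp
  ultimately show ?thesis using ipf ub eig att by auto
qed

interpretation fvs: vector_space "\<lambda>(r::real) (f::'a \<Rightarrow> real). (\<lambda>x. r * f x)"
  by unfold_locales (auto simp: fun_eq_iff algebra_simps)

lemma sum_fun_app: "(\<Sum>v\<in>S. F v) (x::'a) = (\<Sum>v\<in>S. F v x :: real)"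
  by (induction S rule: infinite_finite_induct) auto

lemma eig_orth:
  assumes sy: "symm V M"
    and f: "\<forall>x\<in>V. (\<Sum>y\<in>V. M x y * f y) = mu * f x"
    and g: "\<forall>x\<in>V. (\<Sum>y\<in>V. M x y * g y) = nu * g x"
    and ne: "mu \<noteq> nu"
  shows "ip V f g = 0"
proof -
  have "mu * ip V f g = (\<Sum>x\<in>V. g x * (mu * f x))" unfolding ip_def sum_distrib_left
    by (simp add: mult_ac)
  also have "\<dots> = (\<Sum>x\<in>V. g x * (\<Sum>y\<in>V. M x y * f y))" using f by simp
  also have "\<dots> = (\<Sum>x\<in>V. \<Sum>y\<in>V. M x y * g x * f y)"
    by (simp add: sum_distrib_left mult_ac)
  also have "\<dots> = (\<Sum>x\<in>V. f x * (\<Sum>y\<in>V. M x y * g y))" by (rule cross_swap[OF sy])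
  also have "\<dots> = (\<Sum>x\<in>V. f x * (nu * g x))" using g by simp
  also have "\<dots> = nu * ip V f g" unfolding ip_def sum_distrib_left by (simp add: mult_ac)
  finally have "(mu - nu) * ip V f g = 0" by (simp add: algebra_simps)
  thus ?thesis using ne by simp
qed

lemma eig_finite:
  fixes M :: "'a \<Rightarrow> 'a \<Rightarrow> real"
  assumes fin: "finite V" and sy: "symm V M"
  shows "finite {mu. is_eigenvalue V M mu}"
proof -
  define Eig where "Eig = {mu. is_eigenvalue V M mu}"
  define evp where "evp mu f \<longleftrightarrow> (\<exists>x\<in>V. f x \<noteq> 0) \<and> (\<forall>x\<in>V. (\<Sum>y\<in>V. M x y * f y) = mu * f x)"
    for mu and f :: "'a \<Rightarrow> real"
  define phi where "phi mu = (\<lambda>x. if x \<in> V then (SOME f. evp mu f) x else 0)" for mu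
  have phi: "evp mu (phi mu) \<and> (\<forall>x. x \<notin> V \<longrightarrow> phi mu x = 0)" if "mu \<in> Eig" for mu
  proof -
    have "\<exists>f. evp mu f" using that unfolding Eig_def is_eigenvalue_def evp_def by blast
    hence e: "evp mu (SOME f. evp mu f)" by (rule someI_ex)
    have "\<forall>x\<in>V. phi mu x = (SOME f. evp mu f) x" unfolding phi_def by simp
    hence "evp mu (phi mu)" using e unfolding evp_def by (simp cong: sum.cong)
    thus ?thesis unfolding phi_def by simp
  qed
  have ipp: "ip V (phi mu) (phi mu) > 0" if "mu \<in> Eig" for mu
  proof -
    have "ip V (phi mu) (phi mu) \<noteq> 0" using ip_self_zero[OF fin, of "phi mu"] phi[OF that]
      unfolding evp_def by blast
    thus ?thesis using ip_self_nonneg[of V "phi mu"] by simp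
  qed
  have orth: "ip V (phi mu) (phi nu) = 0" if "mu \<in> Eig" "nu \<in> Eig" "mu \<noteq> nu" for mu nu
    using eig_orth[OF sy _ _ that(3)] phi[OF that(1)] phi[OF that(2)] unfolding evp_def by blast
  have inj: "inj_on phi Eig"
  proof (rule inj_onI)
    fix mu nu assume a: "mu \<in> Eig" "nu \<in> Eig" "phi mu = phi nu"
    show "mu = nu"
    proof (rule ccontr)
      assume "mu \<noteq> nu"
      hence "ip V (phi mu) (phi mu) = 0" using orth[OF a(1,2)] a(3) by simp
      thus False using ipp[OF a(1)] by simp
    qed
  qed
  define T where "T = (\<lambda>a. (\<lambda>x. if x = a then 1 else 0 :: real)) ` V"
  have sp: "phi ` Eig \<subseteq> fvs.span T"
  proof
    fix f assume "f \<in> phi ` Eig"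
    then obtain mu where mu: "mu \<in> Eig" "f = phi mu" by blast
    have z: "\<forall>x. x \<notin> V \<longrightarrow> f x = 0" using phi[OF mu(1)] mu(2) by simp
    have feq: "f = (\<Sum>a\<in>V. (\<lambda>x. f a * (if x = a then 1 else 0)))"
    proof
      fix x
      show "f x = (\<Sum>a\<in>V. (\<lambda>x. f a * (if x = a then 1 else 0))) x"
        unfolding sum_fun_app using z fin by (cases "x \<in> V") (auto simp: if_distrib cong: if_cong)
    qed
    have "(\<Sum>a\<in>V. (\<lambda>x. f a * (if x = a then 1 else 0))) \<in> fvs.span T"
    proof (rule fvs.span_sum)
      fix a assume "a \<in> V"
      hence "(\<lambda>x. if x = a then 1 else 0 :: real) \<in> fvs.span T"
        unfolding T_def by (intro fvs.span_base) blast
      thus "(\<lambda>x. f a * (if x = a then 1 else 0)) \<in> fvs.span T" by (rule fvs.span_scale)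
    qed
    thus "f \<in> fvs.span T" using feq by simp
  qed
  have ind: "fvs.independent (phi ` Eig)"
    unfolding fvs.independent_explicit_finite_subsets
  proof (intro allI impI ballI)
    fix S u v
    assume S: "S \<subseteq> phi ` Eig" "finite S"
      and sum0: "(\<Sum>v\<in>S. (\<lambda>x. u v * v x)) = 0" and v: "v \<in> S"
    obtain mu where mu: "mu \<in> Eig" "v = phi mu" using S(1) v by blast
    have "0 = ip V (\<Sum>v\<in>S. (\<lambda>x. u v * v x)) v" using sum0 unfolding ip_def by simp
    also have "\<dots> = (\<Sum>w\<in>S. u w * ip V w v)"
      unfolding ip_def sum_fun_app sum_distrib_left sum_distrib_right
      by (subst sum.swap) (simp add: mult_ac)
    also have "\<dots> = u v * ip V v v"
    proof (rule sum.remove[OF S(2) v, THEN trans])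
      have "(\<Sum>w\<in>S - {v}. u w * ip V w v) = 0"
      proof (intro sum.neutral ballI)
        fix w assume w: "w \<in> S - {v}"
        obtain nu where nu: "nu \<in> Eig" "w = phi nu" using S(1) w by blast
        have "nu \<noteq> mu" using nu mu w by auto
        thus "u w * ip V w v = 0" using orth[OF nu(1) mu(1)] nu mu by simp
      qed
      thus "u v * ip V v v + (\<Sum>w\<in>S - {v}. u w * ip V w v) = u v * ip V v v" by simp
    qed
    finally show "u v = 0" using ipp[OF mu(1)] mu(2) by simp
  qed
  have "finite T" unfolding T_def using fin by simp
  hence "finite (phi ` Eig)" using fvs.independent_span_bound[OF _ ind sp] by blast
  hence "finite Eig" using finite_imageD inj by blast
  thus ?thesis unfolding Eig_def .
qed

lemma q_index_char:
  assumes fin: "finite V" and ne: "V \<noteq> {}" and sy: "symm V (signless_laplacian E)"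
    and nn: "\<And>x y. x \<in> V \<Longrightarrow> y \<in> V \<Longrightarrow> signless_laplacian E x y \<ge> 0"
  shows "\<exists>f. ip V f f = 1 \<and> qf V (signless_laplacian E) f = q_index V E
     \<and> (\<forall>g. qf V (signless_laplacian E) g \<le> q_index V E * ip V g g) \<and> (\<forall>z\<in>V. f z \<ge> 0)
     \<and> (\<forall>z\<in>V. (\<Sum>y\<in>V. signless_laplacian E z y * f y) = q_index V E * f z)"
proof -
  obtain f l where f: "ip V f f = 1" "qf V (signless_laplacian E) f = l"
    "\<forall>g. qf V (signless_laplacian E) g \<le> l * ip V g g" "\<forall>z\<in>V. f z \<ge> 0"
    "\<forall>z\<in>V. (\<Sum>y\<in>V. signless_laplacian E z y * f y) = l * f z"
    "is_eigenvalue V (signless_laplacian E) l"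
    using top_eig[OF fin ne sy nn] by blast
  have "q_index V E = l" unfolding q_index_def
  proof (rule Max_eqI)
    show "finite {mu. is_eigenvalue V (signless_laplacian E) mu}" by (rule eig_finite[OF fin sy])
    show "l \<in> {mu. is_eigenvalue V (signless_laplacian E) mu}" using f(6) by simp
    fix mu assume "mu \<in> {mu. is_eigenvalue V (signless_laplacian E) mu}"
    thus "mu \<le> l" using eig_le[OF fin, of "signless_laplacian E" l mu] f(3) by auto
  qed
  thus ?thesis using f by auto
qed

lemma sg_edge:
  assumes "simple_graph V E" "{x, y} \<in> E" shows "x \<in> V" "y \<in> V" "x \<noteq> y"
proof -
  obtain a b where ab: "a \<in> V" "b \<in> V" "a \<noteq> b" "{x, y} = {a, b}"
    using assms unfolding simple_graph_def by blast
  hence "(x = a \<and> y = b) \<or> (x = b \<and> y = a)" by (simp add: doubleton_eq_iff)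
  thus "x \<in> V" "y \<in> V" "x \<noteq> y" using ab by auto
qed

lemma nbhd_iff: "y \<in> nbhd E x \<longleftrightarrow> {x, y} \<in> E"
  unfolding nbhd_def by simp

lemma nbhd_sym: "y \<in> nbhd E x \<longleftrightarrow> x \<in> nbhd E y"
  unfolding nbhd_def by (simp add: insert_commute)

lemma nbhd_eq:
  assumes "simple_graph V E" shows "nbhd E x = {y \<in> V. {x, y} \<in> E}"
  using sg_edge[OF assms] unfolding nbhd_def by auto

lemma nbhd_sub: "simple_graph V E \<Longrightarrow> nbhd E x \<subseteq> V"
  by (subst nbhd_eq) auto

lemma nbhd_fin: "simple_graph V E \<Longrightarrow> finite (nbhd E x)"
  using nbhd_sub simple_graph_def finite_subset by metis

lemma nbhd_irr: "simple_graph V E \<Longrightarrow> x \<notin> nbhd E x"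
  using sg_edge(3)[of V E x x] unfolding nbhd_def by auto

lemma sl_symm: "symm V (signless_laplacian E)"
  unfolding symm_def signless_laplacian_def by (simp add: insert_commute eq_commute)

lemma sl_nn: "signless_laplacian E x y \<ge> 0"
  unfolding signless_laplacian_def by auto

lemma deg_sum:
  assumes "simple_graph V E"
  shows "real (deg E x) = (\<Sum>y\<in>V. if {x, y} \<in> E then 1 else 0)"
proof -
  have fin: "finite V" using assms simple_graph_def by blast
  have "real (deg E x) = (\<Sum>y\<in>{y \<in> V. {x, y} \<in> E}. 1)"
    unfolding deg_def nbhd_eq[OF assms] by simp
  also have "\<dots> = (\<Sum>y\<in>V. if {x, y} \<in> E then 1 else 0)" by (rule sum.inter_filter[OF fin])
  finally show ?thesis .
qed

lemma Mv_graph: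
  assumes sg: "simple_graph V E" and x: "x \<in> V"
  shows "(\<Sum>y\<in>V. signless_laplacian E x y * f y) = real (deg E x) * f x + (\<Sum>y\<in>nbhd E x. f y)"
proof -
  have fin: "finite V" using sg simple_graph_def by blast
  have nl: "{x} \<notin> E" using sg_edge(3)[OF sg, of x x] by auto
  have "(\<Sum>y\<in>V. signless_laplacian E x y * f y)
      = (\<Sum>y\<in>V. (if x = y then real (deg E x) * f y else 0)) + (\<Sum>y\<in>V. if {x, y} \<in> E then f y else 0)"
    unfolding signless_laplacian_def sum.distrib[symmetric] by (intro sum.cong refl) (simp add: distrib_right)
  also have "(\<Sum>y\<in>V. (if x = y then real (deg E x) * f y else 0)) = real (deg E x) * f x"
    using x fin by simp
  also have "(\<Sum>y\<in>V. if {x, y} \<in> E then f y else 0) = (\<Sum>y\<in>nbhd E x. f y)"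
    unfolding nbhd_eq[OF sg] by (rule sum.inter_filter[OF fin, symmetric])
  finally show ?thesis .
qed

lemma qf_graph:
  assumes sg: "simple_graph V E"
  shows "qf V (signless_laplacian E) f = (\<Sum>x\<in>V. \<Sum>y\<in>V. if {x, y} \<in> E then f x ^ 2 + f x * f y else 0)"
proof -
  have "qf V (signless_laplacian E) f = (\<Sum>x\<in>V. f x * (\<Sum>y\<in>V. signless_laplacian E x y * f y))"
    unfolding qf_def sum_distrib_left by (intro sum.cong refl) (simp add: mult_ac)
  also have "\<dots> = (\<Sum>x\<in>V. \<Sum>y\<in>V. if {x, y} \<in> E then f x ^ 2 + f x * f y else 0)"
  proof (intro sum.cong refl)
    fix x assume x: "x \<in> V"
    have "f x * (\<Sum>y\<in>V. signless_laplacian E x y * f y) = f x * (real (deg E x) * f x + (\<Sum>y\<in>V. if {x, y} \<in> E then f y else 0))"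
      unfolding Mv_graph[OF sg x] nbhd_eq[OF sg]
      using sum.inter_filter[of V "f" "\<lambda>y. {x, y} \<in> E"] sg simple_graph_def by auto
    also have "\<dots> = (\<Sum>y\<in>V. if {x, y} \<in> E then f x ^ 2 + f x * f y else 0)"
      unfolding deg_sum[OF sg] sum_distrib_right sum_distrib_left sum.distrib[symmetric]
      by (intro sum.cong refl) (auto simp: power2_eq_square algebra_simps)
    finally show "f x * (\<Sum>y\<in>V. signless_laplacian E x y * f y) = \<dots>" .
  qed
  finally show ?thesis .
qed

lemma positive:
  assumes sg: "simple_graph V E" and con: "connected_graph V E"
    and nn: "\<forall>z\<in>V. f z \<ge> 0"
    and eig: "\<forall>z\<in>V. l * f z = real (deg E z) * f z + (\<Sum>y\<in>nbhd E z. f y)"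
    and nz: "a \<in> V" "f a \<noteq> 0"
    and z: "z \<in> V"
  shows "f z > 0"
proof (rule ccontr)
  assume "\<not> f z > 0"
  hence z0: "f z = 0" using nn z by force
  have path: "(\<lambda>a b. {a, b} \<in> E)\<^sup>*\<^sup>* z a" using con z nz(1) unfolding connected_graph_def by blast
  have zb: "f b = 0" if "(\<lambda>a b. {a, b} \<in> E)\<^sup>*\<^sup>* z b" for b
    using that
  proof (induction rule: rtranclp_induct)
    case base thus ?case using z0 .
  next
    case (step b c)
    have bV: "b \<in> V" using sg_edge[OF sg step(2)] by simp
    have "l * f b = real (deg E b) * f b + (\<Sum>y\<in>nbhd E b. f y)" using eig bV by blast
    hence "(\<Sum>y\<in>nbhd E b. f y) = 0" using step(3) by simp
    moreover have "\<forall>y\<in>nbhd E b. f y \<ge> 0" using nn nbhd_sub[OF sg] by blast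
    ultimately have "\<forall>y\<in>nbhd E b. f y = 0" using sum_nonneg_eq_0_iff[OF nbhd_fin[OF sg]] by blast
    moreover have "c \<in> nbhd E b" using step(2) by (simp add: nbhd_iff)
    ultimately show ?case by blast
  qed
  from zb[OF path] nz(2) show False by simp
qed

lemma double_delta:
  assumes "finite V" "v \<in> V" "w \<in> V" "v \<noteq> w"
  shows "(\<Sum>x\<in>V. \<Sum>y\<in>V. if {x, y} = {v, w} then h x y else 0) = h v w + h w v"
proof -
  have "(\<Sum>y\<in>V. if {x, y} = {v, w} then h x y else 0) = (if x = v then h v w else 0) + (if x = w then h w v else 0)"
    if "x \<in> V" for x
  proof -
    have "(\<Sum>y\<in>V. if {x, y} = {v, w} then h x y else 0) = (\<Sum>y\<in>V. (if x = v \<and> y = w then h x y else 0) + (if x = w \<and> y = v then h x y else 0))"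
      using assms(4) by (intro sum.cong refl) (auto simp: doubleton_eq_iff)
    also have "\<dots> = (if x = v then h v w else 0) + (if x = w then h w v else 0)"
    proof -
      have s1: "(\<Sum>y\<in>V. if x = v \<and> y = w then h x y else 0) = (if x = v then h v w else 0)"
        by (cases "x = v") (simp_all add: assms)
      have s2: "(\<Sum>y\<in>V. if x = w \<and> y = v then h x y else 0) = (if x = w then h w v else 0)"
        by (cases "x = w") (simp_all add: assms)
      show ?thesis unfolding sum.distrib s1 s2 ..
    qed
    finally show ?thesis .
  qed
  hence "(\<Sum>x\<in>V. \<Sum>y\<in>V. if {x, y} = {v, w} then h x y else 0) = (\<Sum>x\<in>V. (if x = v then h v w else 0) + (if x = w then h w v else 0))"
    by (rule sum.cong[OF refl])
  also have "\<dots> = h v w + h w v" unfolding sum.distrib using assms by simp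
  finally show ?thesis .
qed

lemma qf_switch:
  assumes sg: "simple_graph V E" and sg': "simple_graph V ((E - {{v, w}}) \<union> {{u, w}})"
    and vw: "{v, w} \<in> E" and uw: "{u, w} \<notin> E" and uv: "u \<noteq> v" "u \<noteq> w" "v \<noteq> w"
    and V: "u \<in> V" "v \<in> V" "w \<in> V"
  shows "qf V (signless_laplacian ((E - {{v, w}}) \<union> {{u, w}})) f = qf V (signless_laplacian E) f - (f v + f w)^2 + (f u + f w)^2"
proof -
  have fin: "finite V" using sg simple_graph_def by blast
  define h where "h x y = f x ^ 2 + f x * f y" for x y
  let ?E' = "(E - {{v, w}}) \<union> {{u, w}}"
  have pw: "(if {x, y} \<in> ?E' then h x y else 0) = (if {x, y} \<in> E then h x y else 0) - (if {x, y} = {v, w} then h x y else 0) + (if {x, y} = {u, w} then h x y else 0)" for x y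
  proof -
    have "{w, u} \<notin> E" "{w, v} \<in> E" using vw uw by (simp_all add: insert_commute)
    thus ?thesis using vw uw uv by (auto simp: doubleton_eq_iff)
  qed
  have "qf V (signless_laplacian ?E') f = (\<Sum>x\<in>V. \<Sum>y\<in>V. if {x, y} \<in> ?E' then h x y else 0)"
    unfolding qf_graph[OF sg'] h_def ..
  also have "\<dots> = (\<Sum>x\<in>V. \<Sum>y\<in>V. if {x, y} \<in> E then h x y else 0) - (\<Sum>x\<in>V. \<Sum>y\<in>V. if {x, y} = {v, w} then h x y else 0) + (\<Sum>x\<in>V. \<Sum>y\<in>V. if {x, y} = {u, w} then h x y else 0)"
    unfolding pw sum.distrib sum_subtractf ..
  also have "\<dots> = qf V (signless_laplacian E) f - (h v w + h w v) + (h u w + h w u)"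
    unfolding qf_graph[OF sg] h_def[symmetric] double_delta[OF fin V(2,3) uv(3)] double_delta[OF fin V(1,3) uv(2)] ..
  finally show ?thesis unfolding h_def by (simp add: power2_eq_square algebra_simps)
qed

theorem lemma2p6:
  fixes V :: "'a set" and E :: "'a set set" and u v w :: 'a
  assumes "simple_graph V E"
    and "connected_graph V E"
    and "u \<in> V"
    and "v \<in> nbhd E u"
    and "deg E v + 2 \<le> deg E u"
    and "w \<in> V - cnbhd E u"
    and "w \<in> nbhd E v"
    and "card (nbhd E v - cnbhd E u) \<in> {1, 2}"
    and "\<forall>z \<in> nbhd E v - cnbhd E u. nbhd E z - {v} \<subseteq> nbhd E v - nbhd E u"
  shows "q_index V ((E - {{v, w}}) \<union> {{u, w}}) > q_index V E"
proof -
  note sg = assms(1)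
  let ?E' = "(E - {{v, w}}) \<union> {{u, w}}"
  let ?N = "nbhd E"
  have fin: "finite V" using sg simple_graph_def by blast
  have ne: "V \<noteq> {}" using assms(3) by blast
  have uvE: "{u, v} \<in> E" using assms(4) by (simp add: nbhd_iff)
  have vwE: "{v, w} \<in> E" using assms(7) by (simp add: nbhd_iff)
  have wnu: "w \<notin> ?N u" "w \<noteq> u" using assms(6) unfolding cnbhd_def by auto
  have uwE: "{u, w} \<notin> E" using wnu(1) by (simp add: nbhd_iff)
  have vV: "v \<in> V" and wV: "w \<in> V" and uv: "u \<noteq> v" and vw: "v \<noteq> w"
    using sg_edge[OF sg uvE] sg_edge[OF sg vwE] by auto
  have sg': "simple_graph V ?E'"
    using sg assms(3) wV wnu(2) unfolding simple_graph_def by auto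
  obtain x where x: "ip V x x = 1" "qf V (signless_laplacian E) x = q_index V E"
     "\<forall>z\<in>V. x z \<ge> 0"
     "\<forall>z\<in>V. (\<Sum>y\<in>V. signless_laplacian E z y * x y) = q_index V E * x z"
    using q_index_char[OF fin ne sl_symm sl_nn, of E] by blast
  obtain x' where x': "\<forall>g. qf V (signless_laplacian ?E') g \<le> q_index V ?E' * ip V g g"
    using q_index_char[OF fin ne sl_symm sl_nn, of ?E'] by blast
  define q where "q = q_index V E"
  have eig: "\<forall>z\<in>V. q * x z = real (deg E z) * x z + (\<Sum>y\<in>?N z. x y)"
    using x(4) Mv_graph[OF sg] unfolding q_def by auto
  have xnz: "\<exists>a\<in>V. x a \<noteq> 0"
  proof (rule ccontr)
    assume "\<not> ?thesis"
    hence "ip V x x = 0" unfolding ip_def by simp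
    thus False using x(1) by simp
  qed
  have pos: "\<forall>z\<in>V. x z > 0"
    using positive[OF sg assms(2) x(3) eig] xnz by blast
  have nn: "\<forall>z\<in>V. x z \<ge> 0" using x(3) .
  have NV: "\<And>z. ?N z \<subseteq> V" using nbhd_sub[OF sg] .
  have Nfin: "\<And>z. finite (?N z)" using nbhd_fin[OF sg] .
  define A where "A = ?N v - cnbhd E u"
  define S where "S = (\<Sum>y\<in>A. x y)"
  define T where "T = (\<Sum>y\<in>?N v \<inter> ?N u. x y)"
  have Afin: "finite A" unfolding A_def using Nfin by simp
  have AV: "A \<subseteq> V" unfolding A_def using NV by blast
  have cardA: "card A \<le> 2" using assms(8) unfolding A_def by auto
  have uNv: "u \<in> ?N v" using assms(4) nbhd_sym[of u E v] by simp
  have unu: "u \<notin> ?N u" using nbhd_irr[OF sg] .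
  have vnv: "v \<notin> ?N v" using nbhd_irr[OF sg] .
  have vA: "v \<notin> A" unfolding A_def using vnv by blast
  have Nv_split: "?N v = insert u ((?N v \<inter> ?N u) \<union> A)"
    unfolding A_def cnbhd_def using uNv by auto
  have sumNv: "(\<Sum>y\<in>?N v. x y) = x u + T + S"
  proof -
    have "u \<notin> (?N v \<inter> ?N u) \<union> A" unfolding A_def cnbhd_def using unu by auto
    moreover have "(?N v \<inter> ?N u) \<inter> A = {}" unfolding A_def cnbhd_def by auto
    ultimately show ?thesis unfolding T_def S_def
      by (subst Nv_split) (simp add: Afin Nfin sum.union_disjoint)
  qed
  have sumNu: "(\<Sum>y\<in>?N u. x y) \<ge> x v + T"
  proof -
    have sub: "insert v (?N v \<inter> ?N u) \<subseteq> ?N u" using assms(4) by blast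
    have "(\<Sum>y\<in>insert v (?N v \<inter> ?N u). x y) = x v + T" unfolding T_def using vnv Nfin by simp
    moreover have "(\<Sum>y\<in>insert v (?N v \<inter> ?N u). x y) \<le> (\<Sum>y\<in>?N u. x y)"
      by (rule sum_mono2[OF Nfin sub]) (use nn NV in auto)
    ultimately show ?thesis by simp
  qed
  have zb: "q * x z \<le> x z + x v + S" if zA: "z \<in> A" for z
  proof -
    have zV: "z \<in> V" using zA AV by blast
    have zsub: "?N z \<subseteq> insert v (A - {z})"
    proof
      fix y assume y: "y \<in> ?N z"
      show "y \<in> insert v (A - {z})"
      proof (cases "y = v")
        case False
        hence "y \<in> ?N v - ?N u" using assms(9) zA y unfolding A_def by blast
        moreover have "y \<noteq> u"
        proof
          assume "y = u"
          hence "z \<in> ?N u" using y nbhd_sym[of u E z] by simp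
          thus False using zA unfolding A_def cnbhd_def by blast
        qed
        moreover have "y \<noteq> z" using y nbhd_irr[OF sg] by blast
        ultimately show ?thesis unfolding A_def cnbhd_def by blast
      qed simp
    qed
    have fz: "finite (insert v (A - {z}))" using Afin by simp
    have "card (?N z) \<le> card (insert v (A - {z}))" by (rule card_mono[OF fz zsub])
    also have "\<dots> \<le> Suc (card (A - {z}))" using Afin by (simp add: card_insert_if)
    also have "\<dots> = card A"
    proof -
      have "card A > 0" using zA Afin card_gt_0_iff by blast
      thus ?thesis using zA Afin by (simp add: card_Diff_singleton)
    qed
    finally have dz: "real (deg E z) \<le> 2" using cardA unfolding deg_def by simp
    have nnI: "\<forall>b\<in>insert v (A - {z}). x b \<ge> 0" using nn AV vV by auto
    have "(\<Sum>y\<in>?N z. x y) \<le> (\<Sum>y\<in>insert v (A - {z}). x y)"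
      by (rule sum_mono2[OF fz zsub]) (use nnI in auto)
    also have "\<dots> = x v + (S - x z)" unfolding S_def using vA Afin zA by (simp add: sum_diff1)
    finally have sz: "(\<Sum>y\<in>?N z. x y) \<le> x v + (S - x z)" .
    have "real (deg E z) * x z \<le> 2 * x z" using dz nn zV by (simp add: mult_right_mono)
    moreover have "q * x z = real (deg E z) * x z + (\<Sum>y\<in>?N z. x y)" using eig zV by blast
    ultimately show ?thesis using sz by linarith
  qed
  have qS: "q * S \<le> 3 * S + 2 * x v"
  proof -
    have "q * S = (\<Sum>z\<in>A. q * x z)" unfolding S_def sum_distrib_left ..
    also have "\<dots> \<le> (\<Sum>z\<in>A. x z + x v + S)" by (rule sum_mono) (rule zb)
    also have "\<dots> = S + real (card A) * (x v + S)" unfolding S_def sum.distrib by (simp add: distrib_left)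
    also have "\<dots> \<le> S + 2 * (x v + S)"
    proof -
      have "x v + S \<ge> 0" unfolding S_def using nn vV AV by (meson add_nonneg_nonneg subsetD sum_nonneg)
      moreover have "real (card A) \<le> 2" using cardA by simp
      ultimately have "real (card A) * (x v + S) \<le> 2 * (x v + S)" by (rule mult_right_mono[rotated])
      thus ?thesis by simp
    qed
    finally show ?thesis by simp
  qed
  have dv: "deg E v \<ge> 2"
  proof -
    have "{u, w} \<subseteq> ?N v" using uNv assms(7) by blast
    hence "card {u, w} \<le> deg E v" unfolding deg_def by (rule card_mono[OF Nfin])
    thus ?thesis using wnu(2) by simp
  qed
  have du: "real (deg E u) \<ge> 4" using dv assms(5) by simp
  have dvu: "real (deg E v) + 2 \<le> real (deg E u)" using assms(5) by simp
  have xu: "x u > 0" and xv: "x v > 0" and xw: "x w > 0" using pos assms(3) vV wV by auto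
  have T0: "T \<ge> 0" unfolding T_def using nn NV by (meson IntD1 subsetD sum_nonneg)
  have S0: "S \<ge> 0" unfolding S_def using nn AV by (meson subsetD sum_nonneg)
  have equ0: "q * x u = real (deg E u) * x u + (\<Sum>y\<in>?N u. x y)" using eig assms(3) by blast
  have eqv0: "q * x v = real (deg E v) * x v + (\<Sum>y\<in>?N v. x y)" using eig vV by blast
  have equ: "q * x u \<ge> real (deg E u) * x u + x v + T" using equ0 sumNu by linarith
  have eqv: "q * x v = real (deg E v) * x v + x u + T + S" using eqv0 sumNv by linarith
  have qdu: "q > real (deg E u)"
  proof -
    have "q * x u > real (deg E u) * x u" using equ xv T0 by linarith
    thus ?thesis using xu by (simp add: mult_less_cancel_right)
  qed
  have S2: "S < 2 * x v"
  proof (cases "S = 0")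
    case True thus ?thesis using xv by simp
  next
    case False
    hence "S > 0" using S0 by simp
    moreover have "q - 4 > 0" using qdu du by simp
    ultimately have "(q - 4) * S > 0" by (simp add: mult_pos_pos)
    moreover have "(q - 4) * S = q * S - 4 * S" by (simp add: algebra_simps)
    ultimately show ?thesis using qS by linarith
  qed
  have "(q - real (deg E u) + 1) * x u > (q - real (deg E u) + 1) * x v"
  proof -
    have e1: "(q - real (deg E u) + 1) * x u = q * x u - real (deg E u) * x u + x u" by (simp add: algebra_simps)
    have e2: "(q - real (deg E v) + 1) * x v = q * x v - real (deg E v) * x v + x v" by (simp add: algebra_simps)
    have a: "(q - real (deg E u) + 1) * x u \<ge> (q - real (deg E v) + 1) * x v - S"
      using equ eqv e1 e2 by linarith
    have b: "(q - real (deg E v) - 1) * x v \<ge> (q - real (deg E u) + 1) * x v"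
      using dvu xv by (intro mult_right_mono) auto
    have e3: "(q - real (deg E v) - 1) * x v = (q - real (deg E v) + 1) * x v - 2 * x v" by (simp add: algebra_simps)
    show ?thesis using a b e3 S2 by linarith
  qed
  hence uv_ineq: "x u > x v" using qdu by (simp add: mult_less_cancel_left_pos)
  have "(x v + x w)^2 < (x u + x w)^2"
    using uv_ineq xv xw by (intro power_strict_mono) auto
  hence "qf V (signless_laplacian ?E') x > q"
    using qf_switch[OF sg sg' vwE uwE uv wnu(2)[symmetric] vw assms(3) vV wV, of x] x(2)
    unfolding q_def by simp
  moreover have "qf V (signless_laplacian ?E') x \<le> q_index V ?E'" using x'[rule_format, of x] x(1) by simp
  ultimately show ?thesis unfolding q_def by simp
qed

end
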